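(* Let $\varphi\colon G\to G$ and $\psi\colon H\to H$ be endomorphisms of abelian groups and let $\varphi\oplus\psi\colon G\oplus H\to G\oplus H$ be given by $(\varphi\oplus\psi)(g,h)=(\varphi g,\psi h)$. Then $\varphi\oplus\psi$ is positively expansive if and only if both $\varphi$ and $\psi$ are positively expansive. Analogously, if $\varphi$ and $\psi$ are automorphisms, then $\varphi\oplus\psi$ is expansive if and only if both $\varphi$ and $\psi$ are expansive.
   Context: $\mathbb N=\{0,1,2,\dots\}$. An endomorphism $\varphi$ of an abelian group $G$ is positively expansive if there is a finite subgroup $S\leq G$ such that for every finite subgroup $F\leq G$ there is $n\in\mathbb N$ with $F\subseteq\sum_{k=0}^n\varphi^kS$. An automorphism $\varphi$ is expansive if there is a finite subgroup $S\leq G$ such that for every finite subgroup $F\leq G$ there is $n\in\mathbb N$ with $F\subseteq\sum_{|k|\leq n}\varphi^kS$. *)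

theory Defs
  imports Main "HOL-Library.Product_Plus"
begin

text \<open>Abelian groups are modelled as types of class ab_group_add; the direct sum
G \<oplus> H is the product type with componentwise addition.\<close>

definition endomorphism :: "('a::ab_group_add \<Rightarrow> 'a) \<Rightarrow> bool" where
  "endomorphism f \<longleftrightarrow> (\<forall>x y. f (x + y) = f x + f y)"

definition automorphism :: "('a::ab_group_add \<Rightarrow> 'a) \<Rightarrow> bool" where
  "automorphism f \<longleftrightarrow> endomorphism f \<and> bij f"

definition finite_subgroup :: "'a::ab_group_add set \<Rightarrow> bool" where
  "finite_subgroup S \<longleftrightarrow> finite S \<and> 0 \<in> S \<and> (\<forall>x\<in>S. \<forall>y\<in>S. x + y \<in> S) \<and> (\<forall>x\<in>S. - x \<in> S)"

definition set_sum :: "('i \<Rightarrow> 'a::ab_group_add set) \<Rightarrow> 'i set \<Rightarrow> 'a set" where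
  "set_sum A I = {(\<Sum>k\<in>I. f k) | f. \<forall>k\<in>I. f k \<in> A k}"

definition zpow :: "('a \<Rightarrow> 'a) \<Rightarrow> int \<Rightarrow> 'a \<Rightarrow> 'a" where
  "zpow f k = (if 0 \<le> k then f ^^ nat k else (inv f) ^^ nat (- k))"

definition pos_expansive :: "('a::ab_group_add \<Rightarrow> 'a) \<Rightarrow> bool" where
  "pos_expansive f \<longleftrightarrow> (\<exists>S. finite_subgroup S \<and>
     (\<forall>F. finite_subgroup F \<longrightarrow> (\<exists>n::nat. F \<subseteq> set_sum (\<lambda>k. (f ^^ k) ` S) {0..n})))"

definition expansive :: "('a::ab_group_add \<Rightarrow> 'a) \<Rightarrow> bool" where
  "expansive f \<longleftrightarrow> (\<exists>S. finite_subgroup S \<and>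
     (\<forall>F. finite_subgroup F \<longrightarrow> (\<exists>n::nat. F \<subseteq> set_sum (\<lambda>k. zpow f k ` S) {- int n..int n})))"

end

theory Submission
  imports Defs
begin

lemma set_sum_mono:
  assumes "finite J" "I \<subseteq> J" "\<forall>k\<in>J. 0 \<in> A k"
  shows "set_sum A I \<subseteq> set_sum A J"
proof
  fix x assume "x \<in> set_sum A I"
  then obtain f where x: "x = (\<Sum>k\<in>I. f k)" and f: "\<forall>k\<in>I. f k \<in> A k"
    unfolding set_sum_def by blast
  define g where "g k = (if k \<in> I then f k else 0)" for k
  have "(\<Sum>k\<in>J. g k) = (\<Sum>k\<in>I. g k)"
    using assms by (intro sum.mono_neutral_right) (auto simp: g_def)
  also have "\<dots> = x" using x by (simp add: g_def)
  finally have "x = (\<Sum>k\<in>J. g k)" by simp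
  moreover have "\<forall>k\<in>J. g k \<in> A k" using f assms by (auto simp: g_def)
  ultimately show "x \<in> set_sum A J" unfolding set_sum_def by blast
qed

lemma set_sum_pair:
  assumes "x \<in> set_sum A I" "y \<in> set_sum B I"
  shows "(x, y) \<in> set_sum (\<lambda>k. A k \<times> B k) I"
proof -
  obtain f where x: "x = (\<Sum>k\<in>I. f k)" and f: "\<forall>k\<in>I. f k \<in> A k"
    using assms(1) unfolding set_sum_def by blast
  obtain g where y: "y = (\<Sum>k\<in>I. g k)" and g: "\<forall>k\<in>I. g k \<in> B k"
    using assms(2) unfolding set_sum_def by blast
  have "(x, y) = (\<Sum>k\<in>I. (f k, g k))"
    by (rule prod_eqI) (simp_all add: x y fst_sum snd_sum)
  moreover have "\<forall>k\<in>I. (f k, g k) \<in> A k \<times> B k" using f g by auto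
  ultimately show ?thesis unfolding set_sum_def by blast
qed

lemma set_sum_fst:
  assumes "z \<in> set_sum A I"
  shows "fst z \<in> set_sum (\<lambda>k. fst ` A k) I"
proof -
  obtain f where z: "z = (\<Sum>k\<in>I. f k)" and f: "\<forall>k\<in>I. f k \<in> A k"
    using assms unfolding set_sum_def by blast
  have "fst z = (\<Sum>k\<in>I. fst (f k))" by (simp add: z fst_sum)
  moreover have "\<forall>k\<in>I. fst (f k) \<in> fst ` A k" using f by auto
  ultimately show ?thesis unfolding set_sum_def by blast
qed

lemma set_sum_snd:
  assumes "z \<in> set_sum A I"
  shows "snd z \<in> set_sum (\<lambda>k. snd ` A k) I"
proof -
  obtain f where z: "z = (\<Sum>k\<in>I. f k)" and f: "\<forall>k\<in>I. f k \<in> A k"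
    using assms unfolding set_sum_def by blast
  have "snd z = (\<Sum>k\<in>I. snd (f k))" by (simp add: z snd_sum)
  moreover have "\<forall>k\<in>I. snd (f k) \<in> snd ` A k" using f by auto
  ultimately show ?thesis unfolding set_sum_def by blast
qed

lemma fsg_fst:
  assumes "finite_subgroup S" shows "finite_subgroup (fst ` S)"
  unfolding finite_subgroup_def
proof (intro conjI ballI)
  show "finite (fst ` S)" using assms unfolding finite_subgroup_def by simp
  have "0 \<in> S" using assms unfolding finite_subgroup_def by simp
  then show "0 \<in> fst ` S" by (rule rev_image_eqI) simp
  fix x y assume "x \<in> fst ` S" "y \<in> fst ` S"
  then obtain a b where ab: "a \<in> S" "b \<in> S" "x = fst a" "y = fst b" by blast
  have "a + b \<in> S" "- a \<in> S" using assms ab unfolding finite_subgroup_def by simp_all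
  then have "fst (a + b) \<in> fst ` S" "fst (- a) \<in> fst ` S" by (meson imageI)+
  then show "x + y \<in> fst ` S" "- x \<in> fst ` S" using ab by simp_all
qed

lemma fsg_snd:
  assumes "finite_subgroup S" shows "finite_subgroup (snd ` S)"
  unfolding finite_subgroup_def
proof (intro conjI ballI)
  show "finite (snd ` S)" using assms unfolding finite_subgroup_def by simp
  have "0 \<in> S" using assms unfolding finite_subgroup_def by simp
  then show "0 \<in> snd ` S" by (rule rev_image_eqI) simp
  fix x y assume "x \<in> snd ` S" "y \<in> snd ` S"
  then obtain a b where ab: "a \<in> S" "b \<in> S" "x = snd a" "y = snd b" by blast
  have "a + b \<in> S" "- a \<in> S" using assms ab unfolding finite_subgroup_def by simp_all
  then have "snd (a + b) \<in> snd ` S" "snd (- a) \<in> snd ` S" by (meson imageI)+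
  then show "x + y \<in> snd ` S" "- x \<in> snd ` S" using ab by simp_all
qed

lemma fsg_times:
  assumes "finite_subgroup A" "finite_subgroup B" shows "finite_subgroup (A \<times> B)"
  using assms unfolding finite_subgroup_def zero_prod_def
  by (auto simp: uminus_Pair add_Pair)

lemma map_prod_times: "map_prod f g ` (A \<times> B) = f ` A \<times> g ` B"
  by auto

lemma fst_map_prod_image: "fst ` map_prod f g ` S = f ` fst ` S"
  by (simp add: image_image)

lemma snd_map_prod_image: "snd ` map_prod f g ` S = g ` snd ` S"
  by (simp add: image_image)

definition expE :: "('i \<Rightarrow> 'a::ab_group_add \<Rightarrow> 'a) \<Rightarrow> (nat \<Rightarrow> 'i set) \<Rightarrow> bool" where
  "expE P I \<longleftrightarrow> (\<exists>S. finite_subgroup S \<and>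
     (\<forall>F. finite_subgroup F \<longrightarrow> (\<exists>n. F \<subseteq> set_sum (\<lambda>k. P k ` S) (I n))))"

lemma generic:
  fixes P :: "'i \<Rightarrow> 'a::ab_group_add \<Rightarrow> 'a" and Q :: "'i \<Rightarrow> 'b::ab_group_add \<Rightarrow> 'b"
  assumes fin: "\<And>n. finite (I n)" and mono: "\<And>n m. n \<le> m \<Longrightarrow> I n \<subseteq> I m"
    and P0: "\<And>k. P k 0 = 0" and Q0: "\<And>k. Q k 0 = 0"
  shows "expE (\<lambda>k. map_prod (P k) (Q k)) I \<longleftrightarrow> expE P I \<and> expE Q I"
proof
  assume "expE (\<lambda>k. map_prod (P k) (Q k)) I"
  then obtain S where S: "finite_subgroup S"
    and H0: "\<forall>F. finite_subgroup F \<longrightarrow> (\<exists>n. F \<subseteq> set_sum (\<lambda>k. map_prod (P k) (Q k) ` S) (I n))"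
    unfolding expE_def by (elim exE conjE)
  have H: "\<exists>n. F \<subseteq> set_sum (\<lambda>k. map_prod (P k) (Q k) ` S) (I n)" if "finite_subgroup F" for F
    by (rule H0[rule_format, OF that])
  have "expE P I" unfolding expE_def
  proof (rule exI[where x="fst ` S"], intro conjI allI impI)
    show "finite_subgroup (fst ` S)" using S by (rule fsg_fst)
    fix F :: "'a set" assume F: "finite_subgroup F"
    have "finite_subgroup (F \<times> {0::'b})"
      using F by (intro fsg_times) (auto simp: finite_subgroup_def)
    from H[OF this] obtain n where n: "F \<times> {0} \<subseteq> set_sum (\<lambda>k. map_prod (P k) (Q k) ` S) (I n)" by blast
    have "F \<subseteq> set_sum (\<lambda>k. P k ` fst ` S) (I n)"
    proof
      fix x assume "x \<in> F"
      then have "(x, 0) \<in> F \<times> {0}" by simp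
      then have "(x, 0) \<in> set_sum (\<lambda>k. map_prod (P k) (Q k) ` S) (I n)" using n by (rule subsetD[rotated])
      from set_sum_fst[OF this] show "x \<in> set_sum (\<lambda>k. P k ` fst ` S) (I n)"
        by (simp only: fst_map_prod_image fst_conv)
    qed
    then show "\<exists>n. F \<subseteq> set_sum (\<lambda>k. P k ` fst ` S) (I n)" by blast
  qed
  moreover have "expE Q I" unfolding expE_def
  proof (rule exI[where x="snd ` S"], intro conjI allI impI)
    show "finite_subgroup (snd ` S)" using S by (rule fsg_snd)
    fix F :: "'b set" assume F: "finite_subgroup F"
    have "finite_subgroup ({0::'a} \<times> F)"
      using F by (intro fsg_times) (auto simp: finite_subgroup_def)
    from H[OF this] obtain n where n: "{0} \<times> F \<subseteq> set_sum (\<lambda>k. map_prod (P k) (Q k) ` S) (I n)" by blast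
    have "F \<subseteq> set_sum (\<lambda>k. Q k ` snd ` S) (I n)"
    proof
      fix x assume "x \<in> F"
      then have "(0, x) \<in> {0} \<times> F" by simp
      then have "(0, x) \<in> set_sum (\<lambda>k. map_prod (P k) (Q k) ` S) (I n)" using n by (rule subsetD[rotated])
      from set_sum_snd[OF this] show "x \<in> set_sum (\<lambda>k. Q k ` snd ` S) (I n)"
        by (simp only: snd_map_prod_image snd_conv)
    qed
    then show "\<exists>n. F \<subseteq> set_sum (\<lambda>k. Q k ` snd ` S) (I n)" by blast
  qed
  ultimately show "expE P I \<and> expE Q I" ..
next
  assume "expE P I \<and> expE Q I"
  then obtain S1 S2 where S1: "finite_subgroup S1"
    and H10: "\<forall>F. finite_subgroup F \<longrightarrow> (\<exists>n. F \<subseteq> set_sum (\<lambda>k. P k ` S1) (I n))"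
    and S2: "finite_subgroup S2"
    and H20: "\<forall>F. finite_subgroup F \<longrightarrow> (\<exists>n. F \<subseteq> set_sum (\<lambda>k. Q k ` S2) (I n))"
    unfolding expE_def by (elim exE conjE)
  have H1: "\<exists>n. F \<subseteq> set_sum (\<lambda>k. P k ` S1) (I n)" if "finite_subgroup F" for F
    by (rule H10[rule_format, OF that])
  have H2: "\<exists>n. F \<subseteq> set_sum (\<lambda>k. Q k ` S2) (I n)" if "finite_subgroup F" for F
    by (rule H20[rule_format, OF that])
  show "expE (\<lambda>k. map_prod (P k) (Q k)) I" unfolding expE_def
  proof (rule exI[where x="S1 \<times> S2"], intro conjI allI impI)
    show "finite_subgroup (S1 \<times> S2)" using S1 S2 by (rule fsg_times)
    fix F :: "('a \<times> 'b) set" assume F: "finite_subgroup F"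
    obtain n1 where n1: "fst ` F \<subseteq> set_sum (\<lambda>k. P k ` S1) (I n1)" using H1[OF fsg_fst[OF F]] by blast
    obtain n2 where n2: "snd ` F \<subseteq> set_sum (\<lambda>k. Q k ` S2) (I n2)" using H2[OF fsg_snd[OF F]] by blast
    define n where "n = max n1 n2"
    have "0 \<in> S1" using S1 unfolding finite_subgroup_def by simp
    then have z1: "0 \<in> P k ` S1" for k using P0[of k] by (metis imageI)
    have "0 \<in> S2" using S2 unfolding finite_subgroup_def by simp
    then have z2: "0 \<in> Q k ` S2" for k using Q0[of k] by (metis imageI)
    have m1: "set_sum (\<lambda>k. P k ` S1) (I n1) \<subseteq> set_sum (\<lambda>k. P k ` S1) (I n)"
    proof (rule set_sum_mono)
      show "finite (I n)" by (rule fin)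
      show "I n1 \<subseteq> I n" by (rule mono) (simp add: n_def)
      show "\<forall>k\<in>I n. 0 \<in> P k ` S1" using z1 by blast
    qed
    have m2: "set_sum (\<lambda>k. Q k ` S2) (I n2) \<subseteq> set_sum (\<lambda>k. Q k ` S2) (I n)"
    proof (rule set_sum_mono)
      show "finite (I n)" by (rule fin)
      show "I n2 \<subseteq> I n" by (rule mono) (simp add: n_def)
      show "\<forall>k\<in>I n. 0 \<in> Q k ` S2" using z2 by blast
    qed
    have "F \<subseteq> set_sum (\<lambda>k. map_prod (P k) (Q k) ` (S1 \<times> S2)) (I n)"
    proof
      fix z assume "z \<in> F"
      then have a0: "fst z \<in> fst ` F" and b0: "snd z \<in> snd ` F" by (meson imageI)+
      have a: "fst z \<in> set_sum (\<lambda>k. P k ` S1) (I n)" using a0 n1 m1 by blast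
      have b: "snd z \<in> set_sum (\<lambda>k. Q k ` S2) (I n)" using b0 n2 m2 by blast
      from set_sum_pair[OF a b] show "z \<in> set_sum (\<lambda>k. map_prod (P k) (Q k) ` (S1 \<times> S2)) (I n)"
        by (simp add: map_prod_times)
    qed
    then show "\<exists>n. F \<subseteq> set_sum (\<lambda>k. map_prod (P k) (Q k) ` (S1 \<times> S2)) (I n)" by blast
  qed
qed

lemma pos_expansive_E: "pos_expansive f \<longleftrightarrow> expE (\<lambda>k. f ^^ k) (\<lambda>n. {0..n})"
  unfolding pos_expansive_def expE_def ..

lemma expansive_E: "expansive f \<longleftrightarrow> expE (zpow f) (\<lambda>n. {- int n..int n})"
  unfolding expansive_def expE_def ..

lemma funpow_map_prod:
  fixes f :: "'a \<Rightarrow> 'a" and g :: "'b \<Rightarrow> 'b"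
  shows "map_prod f g ^^ k = map_prod (f ^^ k) (g ^^ k)"
  by (induction k) (auto simp: map_prod.id)

lemma endo_0: "endomorphism f \<Longrightarrow> f 0 = 0"
  unfolding endomorphism_def by (metis add_cancel_right_right add_0)

lemma funpow_0: "f 0 = (0::'a::zero) \<Longrightarrow> ((f::'a\<Rightarrow>'a) ^^ k) 0 = 0"
  by (induction k) auto

lemma inv_map_prod:
  fixes f :: "'a \<Rightarrow> 'a" and g :: "'b \<Rightarrow> 'b"
  shows "bij f \<Longrightarrow> bij g \<Longrightarrow> inv (map_prod f g) = map_prod (inv f) (inv g)"
  by (rule inv_equality) (auto simp: bij_def surj_f_inv_f inv_f_f)

lemma zpow_map_prod:
  fixes f :: "'a \<Rightarrow> 'a" and g :: "'b \<Rightarrow> 'b"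
  shows "bij f \<Longrightarrow> bij g \<Longrightarrow> zpow (map_prod f g) k = map_prod (zpow f k) (zpow g k)"
  by (simp add: zpow_def inv_map_prod funpow_map_prod)

lemma zpow_0: "bij f \<Longrightarrow> (f::'a::zero\<Rightarrow>'a) 0 = 0 \<Longrightarrow> zpow f k 0 = 0"
proof -
  assume b: "bij f" and f0: "f 0 = 0"
  have i0: "inv f 0 = 0" using bij_is_inj[OF b] f0 by (rule inv_f_eq)
  show ?thesis unfolding zpow_def using funpow_0[of f, OF f0] funpow_0[of "inv f", OF i0] by simp
qed

theorem proposition2p7:
  fixes \<phi> :: "'a::ab_group_add \<Rightarrow> 'a" and \<psi> :: "'b::ab_group_add \<Rightarrow> 'b"
  assumes "endomorphism \<phi>" and "endomorphism \<psi>"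
  shows "(pos_expansive (map_prod \<phi> \<psi>) \<longleftrightarrow> pos_expansive \<phi> \<and> pos_expansive \<psi>)
     \<and> (automorphism \<phi> \<and> automorphism \<psi> \<longrightarrow>
          (expansive (map_prod \<phi> \<psi>) \<longleftrightarrow> expansive \<phi> \<and> expansive \<psi>))"
proof (intro conjI impI)
  have p0: "\<phi> 0 = 0" "\<psi> 0 = 0" using assms by (simp_all add: endo_0)
  show "pos_expansive (map_prod \<phi> \<psi>) \<longleftrightarrow> pos_expansive \<phi> \<and> pos_expansive \<psi>"
    unfolding pos_expansive_E funpow_map_prod
    by (rule generic) (simp_all add: funpow_0 p0)
  assume "automorphism \<phi> \<and> automorphism \<psi>"
  then have b: "bij \<phi>" "bij \<psi>" by (simp_all add: automorphism_def)
  show "expansive (map_prod \<phi> \<psi>) \<longleftrightarrow> expansive \<phi> \<and> expansive \<psi>"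
    unfolding expansive_E zpow_map_prod[OF b, abs_def]
    by (rule generic) (simp_all add: zpow_0 p0 b)
qed

end
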